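(* Let $G$ be a connected graph with vertex set $\{u_1,\dots,u_n\}$, $n\ge2$, with non-singleton true twin equivalence classes $U_1,\dots,U_k$, and let $\mathcal{H}=\{H_1,\dots,H_n\}$ be a family of non-empty graphs (each having at least one edge). Then $$\dim_l(G\circ\mathcal{H})=\sum_{i=1}^n\operatorname{adim}_l(H_i)+\sum_{j:\,I\cap U_j\ne\emptyset}(|I\cap U_j|-1),$$ where $I=\{u_i: H_i\in\mathcal{G}\}$.
   Context: All graphs are finite and simple. $d_G$ is shortest-path distance ($+\infty$ between components), $d_{G,2}=\min\{d_G,2\}$; $s$ distinguishes $x,y$ w.r.t. $d$ if $d(s,x)\ne d(s,y)$. $\dim_l(G)$: minimum size of $S\subseteq V(G)$ such that any two adjacent vertices are distinguished w.r.t. $d_G$ by some vertex of $S$. $\operatorname{adim}_l(H)$: minimum size of $S\subseteq V(H)$ such that any two adjacent vertices are distinguished w.r.t. $d_{H,2}$ by some vertex of $S$; minimum such sets are local adjacency bases. $\mathcal{G}$: class of graphs $H$ such that every local adjacency basis $B$ of $H$ satisfies $B\subseteq N_H(v)$ for some $v\in V(H)$. True twins: $N[x]=N[y]$. Lexicographic product $G\circ\mathcal{H}$: vertex set $\bigcup_i\{u_i\}\times V(H_i)$, $(u_i,v)\sim(u_j,w)$ iff $u_iu_j\in E(G)$, or $i=j$ and $vw\in E(H_i)$. *)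

theory Defs
  imports Main "HOL-Library.Extended_Nat"
begin

definition graph :: "'a set \<Rightarrow> ('a \<Rightarrow> 'a \<Rightarrow> bool) \<Rightarrow> bool" where
  "graph V E \<longleftrightarrow> finite V \<and> (\<forall>x y. E x y \<longrightarrow> x \<in> V \<and> y \<in> V \<and> x \<noteq> y \<and> E y x)"

definition connected_graph :: "'a set \<Rightarrow> ('a \<Rightarrow> 'a \<Rightarrow> bool) \<Rightarrow> bool" where
  "connected_graph V E \<longleftrightarrow> (\<forall>x\<in>V. \<forall>y\<in>V. \<exists>n. (E ^^ n) x y)"

definition dist :: "('a \<Rightarrow> 'a \<Rightarrow> bool) \<Rightarrow> 'a \<Rightarrow> 'a \<Rightarrow> enat" where
  "dist E x y = (if \<exists>n. (E ^^ n) x y then enat (LEAST n. (E ^^ n) x y) else \<infinity>)"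

definition dist2 :: "('a \<Rightarrow> 'a \<Rightarrow> bool) \<Rightarrow> 'a \<Rightarrow> 'a \<Rightarrow> enat" where
  "dist2 E x y = min (dist E x y) 2"

definition local_resolving :: "('a \<Rightarrow> 'a \<Rightarrow> bool) \<Rightarrow> ('a \<Rightarrow> 'a \<Rightarrow> enat) \<Rightarrow> 'a set \<Rightarrow> bool" where
  "local_resolving E d S \<longleftrightarrow> (\<forall>x y. E x y \<longrightarrow> (\<exists>s\<in>S. d s x \<noteq> d s y))"

definition local_metric_dim :: "'a set \<Rightarrow> ('a \<Rightarrow> 'a \<Rightarrow> bool) \<Rightarrow> nat" where
  "local_metric_dim V E = (LEAST k. \<exists>S. S \<subseteq> V \<and> card S = k \<and> local_resolving E (dist E) S)"

definition local_adj_dim :: "'a set \<Rightarrow> ('a \<Rightarrow> 'a \<Rightarrow> bool) \<Rightarrow> nat" where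
  "local_adj_dim V E = (LEAST k. \<exists>S. S \<subseteq> V \<and> card S = k \<and> local_resolving E (dist2 E) S)"

definition local_adj_basis :: "'a set \<Rightarrow> ('a \<Rightarrow> 'a \<Rightarrow> bool) \<Rightarrow> 'a set \<Rightarrow> bool" where
  "local_adj_basis V E B \<longleftrightarrow> B \<subseteq> V \<and> local_resolving E (dist2 E) B \<and> card B = local_adj_dim V E"

definition class_G :: "'a set \<Rightarrow> ('a \<Rightarrow> 'a \<Rightarrow> bool) \<Rightarrow> bool" where
  "class_G V E \<longleftrightarrow> (\<forall>B. local_adj_basis V E B \<longrightarrow> (\<exists>v\<in>V. B \<subseteq> {w. E v w}))"

definition closed_nbhd :: "('a \<Rightarrow> 'a \<Rightarrow> bool) \<Rightarrow> 'a \<Rightarrow> 'a set" where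
  "closed_nbhd E x = insert x {y. E x y}"

definition twin_class :: "'a set \<Rightarrow> ('a \<Rightarrow> 'a \<Rightarrow> bool) \<Rightarrow> 'a \<Rightarrow> 'a set" where
  "twin_class V E x = {y \<in> V. closed_nbhd E y = closed_nbhd E x}"

(* lexicographic product G \<circ> H, H u = (HV u, HE u) the graph attached to vertex u *)
definition lex_V :: "'a set \<Rightarrow> ('a \<Rightarrow> 'b set) \<Rightarrow> ('a \<times> 'b) set" where
  "lex_V V HV = Sigma V HV"

definition lex_E :: "'a set \<Rightarrow> ('a \<Rightarrow> 'a \<Rightarrow> bool) \<Rightarrow> ('a \<Rightarrow> 'b set) \<Rightarrow> ('a \<Rightarrow> 'b \<Rightarrow> 'b \<Rightarrow> bool)
    \<Rightarrow> ('a \<times> 'b) \<Rightarrow> ('a \<times> 'b) \<Rightarrow> bool" where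
  "lex_E V E HV HE p q \<longleftrightarrow> p \<in> Sigma V HV \<and> q \<in> Sigma V HV \<and>
     (E (fst p) (fst q) \<or> (fst p = fst q \<and> HE (fst p) (snd p) (snd q)))"

end

theory Submission
  imports Defs
begin


definition delta :: "('b \<Rightarrow> 'b \<Rightarrow> bool) \<Rightarrow> 'b \<Rightarrow> 'b \<Rightarrow> enat" where
  "delta H c a = (if c = a then 0 else if H c a then 1 else 2)"

definition W :: "('a \<Rightarrow> 'a \<Rightarrow> bool) \<Rightarrow> nat \<Rightarrow> 'a \<Rightarrow> 'a \<Rightarrow> bool" where
  "W E n x y \<longleftrightarrow> (\<exists>m\<le>n. (E ^^ m) x y)"

lemma dist_eqI:
  assumes "(E ^^ k) x y" "\<And>m. m < k \<Longrightarrow> \<not> (E ^^ m) x y"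
  shows "dist E x y = enat k"
proof -
  have "(LEAST n. (E ^^ n) x y) = k"
    by (rule Least_equality) (use assms not_less in auto)
  then show ?thesis using assms(1) unfolding dist_def by auto
qed

lemma dist_refl: "dist E x x = 0"
  using dist_eqI[where E=E and k=0 and x=x and y=x] by (simp add: zero_enat_def)

lemma dist_one: "dist E x y = 1 \<longleftrightarrow> x \<noteq> y \<and> E x y"
proof
  assume h: "dist E x y = 1"
  then have ex: "\<exists>n. (E ^^ n) x y" unfolding dist_def by (auto split: if_splits)
  with h have l: "(LEAST n. (E ^^ n) x y) = 1" unfolding dist_def by (simp add: one_enat_def)
  from LeastI_ex[OF ex] have "(E ^^ 1) x y" unfolding l .
  then have "E x y" by (simp add: relcompp_apply)
  moreover from not_less_Least[of 0 "\<lambda>n. (E ^^ n) x y"] l have "x \<noteq> y" by auto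
  ultimately show "x \<noteq> y \<and> E x y" by simp
next
  assume "x \<noteq> y \<and> E x y"
  then show "dist E x y = 1" using dist_eqI[where E=E and k=1 and x=x and y=y] by (auto simp: one_enat_def less_Suc_eq)
qed

lemma dist_ge2:
  assumes "x \<noteq> y" "\<not> E x y" shows "dist E x y \<ge> 2"
proof (cases "\<exists>n. (E ^^ n) x y")
  case True
  let ?l = "LEAST n. (E ^^ n) x y"
  have "(E ^^ ?l) x y" using LeastI_ex[OF True] .
  have "?l \<noteq> 0"
  proof
    assume "?l = 0" with \<open>(E ^^ ?l) x y\<close> have "(E ^^ 0) x y" by simp
    then show False using assms by simp
  qed
  moreover have "?l \<noteq> 1"
  proof
    assume "?l = 1" with \<open>(E ^^ ?l) x y\<close> have "(E ^^ 1) x y" by simp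
    then show False using assms by (auto simp: relcompp_apply)
  qed
  ultimately have "?l \<ge> 2" by linarith
  then show ?thesis using True unfolding dist_def by (simp add: numeral_eq_enat)
next
  case False then show ?thesis unfolding dist_def by simp
qed

lemma dist2_delta: "dist2 H c a = delta H c a"
  unfolding dist2_def delta_def
  using dist_refl[of H c] dist_one[of H c a] dist_ge2[of c a H]
  by (auto simp: min_def)

lemma Least_W:
  assumes "\<exists>n. P n"
  shows "(LEAST n. P n) = (LEAST n. \<exists>m\<le>n. P (m::nat))"
proof (rule Least_equality[symmetric])
  show "\<exists>m\<le>(LEAST n. P n). P m" using LeastI_ex[OF assms] by auto
  fix y assume "\<exists>m\<le>y. P m"
  then obtain m where "m \<le> y" "P m" by auto
  then show "(LEAST n. P n) \<le> y" using Least_le[of P m] by auto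
qed

lemma dist_W:
  assumes "\<And>n. W E n x y \<longleftrightarrow> W E' n x' y'"
  shows "dist E x y = dist E' x' y'"
proof -
  have ex: "(\<exists>n. (E ^^ n) x y) \<longleftrightarrow> (\<exists>n. (E' ^^ n) x' y')"
    using assms unfolding W_def by (metis order_refl)
  show ?thesis
  proof (cases "\<exists>n. (E ^^ n) x y")
    case True
    with ex have T2: "\<exists>n. (E' ^^ n) x' y'" by simp
    have "(LEAST n. (E ^^ n) x y) = (LEAST n. W E n x y)"
      unfolding W_def by (rule Least_W[OF True])
    also have "\<dots> = (LEAST n. W E' n x' y')" using assms by simp
    also have "\<dots> = (LEAST n. (E' ^^ n) x' y')"
      unfolding W_def by (rule Least_W[OF T2, symmetric])
    finally show ?thesis using True T2 unfolding dist_def by simp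
  next
    case False with ex show ?thesis unfolding dist_def by simp
  qed
qed

lemma W_mono: "W E n x y \<Longrightarrow> n \<le> n' \<Longrightarrow> W E n' x y"
  unfolding W_def by (meson order_trans)



locale lexs =
  fixes V :: "'a set" and E :: "'a \<Rightarrow> 'a \<Rightarrow> bool"
    and HV :: "'a \<Rightarrow> 'b set" and HE :: "'a \<Rightarrow> 'b \<Rightarrow> 'b \<Rightarrow> bool"
  assumes gG: "graph V E" and cG: "connected_graph V E" and cV: "card V \<ge> 2"
    and gH: "\<forall>u\<in>V. graph (HV u) (HE u) \<and> (\<exists>v w. HE u v w)"
begin

abbreviation "L \<equiv> lex_E V E HV HE"

lemma E_sym: "E x y \<Longrightarrow> E y x" using gG unfolding graph_def by blast
lemma E_V: "E x y \<Longrightarrow> x \<in> V \<and> y \<in> V" using gG unfolding graph_def by blast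
lemma E_irr: "\<not> E x x" using gG unfolding graph_def by blast
lemma finV: "finite V" using gG unfolding graph_def by blast

lemma H_sym: "u \<in> V \<Longrightarrow> HE u x y \<Longrightarrow> HE u y x" using gH unfolding graph_def by blast
lemma H_V: "u \<in> V \<Longrightarrow> HE u x y \<Longrightarrow> x \<in> HV u \<and> y \<in> HV u" using gH unfolding graph_def by blast
lemma H_irr: "u \<in> V \<Longrightarrow> \<not> HE u x x" using gH unfolding graph_def by blast
lemma finH: "u \<in> V \<Longrightarrow> finite (HV u)" using gH unfolding graph_def by blast
lemma H_ne: "u \<in> V \<Longrightarrow> \<exists>d. d \<in> HV u" using gH H_V by blast

lemma L_iff: "L p q \<longleftrightarrow> p \<in> Sigma V HV \<and> q \<in> Sigma V HV \<and>
     (E (fst p) (fst q) \<or> (fst p = fst q \<and> HE (fst p) (snd p) (snd q)))"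
  unfolding lex_E_def by simp

lemma lift:
  assumes "(E ^^ m) w u" "m \<ge> 1" "c \<in> HV w" "a \<in> HV u"
  shows "(L ^^ m) (w, c) (u, a)"
  using assms
proof (induction m arbitrary: u a)
  case 0 then show ?case by simp
next
  case (Suc k)
  from Suc.prems(1) obtain z where z: "(E ^^ k) w z" "E z u" by (rule relpowp_Suc_E)
  show ?case
  proof (cases "k = 0")
    case True
    with z have "w = z" by simp
    with z have "L (w, c) (u, a)" using Suc.prems E_V by (auto simp: L_iff)
    then show ?thesis using True by (simp add: relcompp_apply)
  next
    case False
    from z E_V obtain d where d: "d \<in> HV z" using H_ne by blast
    have "(L ^^ k) (w, c) (z, d)" using Suc.IH[OF z(1) _ Suc.prems(3) d] False by simp
    moreover have "L (z, d) (u, a)" using z d Suc.prems E_V by (auto simp: L_iff)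
    ultimately show ?thesis by (rule relpowp_Suc_I)
  qed
qed

lemma proj: "(L ^^ m) p q \<Longrightarrow> W E m (fst p) (fst q)"
proof (induction m arbitrary: q)
  case 0 then show ?case by (auto simp: W_def)
next
  case (Suc m)
  from Suc.prems obtain r where r: "(L ^^ m) p r" "L r q" by (rule relpowp_Suc_E)
  from Suc.IH[OF r(1)] obtain k where k: "k \<le> m" "(E ^^ k) (fst p) (fst r)" unfolding W_def by auto
  from r(2) have "E (fst r) (fst q) \<or> fst r = fst q" by (auto simp: L_iff)
  then show ?case
  proof
    assume e: "E (fst r) (fst q)"
    have "(E ^^ Suc k) (fst p) (fst q)" using k(2) e by (rule relpowp_Suc_I)
    moreover have "Suc k \<le> Suc m" using k(1) by simp
    ultimately show ?thesis unfolding W_def by blast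
  next
    assume "fst r = fst q" with k show ?thesis unfolding W_def by (metis le_SucI)
  qed
qed

lemma distL_diff:
  assumes "(w, c) \<in> Sigma V HV" "(u, a) \<in> Sigma V HV" "w \<noteq> u"
  shows "dist L (w, c) (u, a) = dist E w u"
proof (rule dist_W)
  fix n
  show "W L n (w, c) (u, a) \<longleftrightarrow> W E n w u"
  proof
    assume "W L n (w, c) (u, a)"
    then obtain m where "m \<le> n" "(L ^^ m) (w, c) (u, a)" unfolding W_def by auto
    then show "W E n w u" using proj[of m "(w,c)" "(u,a)"] W_mono by auto
  next
    assume "W E n w u"
    then obtain m where m: "m \<le> n" "(E ^^ m) w u" unfolding W_def by auto
    have "m \<noteq> 0" using m assms(3) by (cases m) auto
    then have "(L ^^ m) (w, c) (u, a)" using lift[OF m(2)] assms by auto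
    with m show "W L n (w, c) (u, a)" unfolding W_def by auto
  qed
qed

lemma nbr: "u \<in> V \<Longrightarrow> \<exists>y. E u y"
proof -
  assume u: "u \<in> V"
  have "\<exists>z\<in>V. z \<noteq> u"
  proof (rule ccontr)
    assume "\<not> (\<exists>z\<in>V. z \<noteq> u)"
    then have "V \<subseteq> {u}" by auto
    then have "card V \<le> 1" using card_mono[of "{u}" V] by simp
    with cV show False by simp
  qed
  then obtain z where z: "z \<in> V" "z \<noteq> u" by auto
  with cG u obtain n where n: "(E ^^ n) u z" unfolding connected_graph_def by blast
  with z have "n \<noteq> 0" by (cases n) auto
  then obtain k where "n = Suc k" by (cases n) auto
  with n show ?thesis using relpowp_Suc_D2 by metis
qed

lemma distL_same:
  assumes "u \<in> V" "c \<in> HV u" "a \<in> HV u"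
  shows "dist L (u, c) (u, a) = delta (HE u) c a"
proof -
  have Le: "L (u, c) (u, a) \<longleftrightarrow> HE u c a" using assms E_irr by (auto simp: L_iff)
  show ?thesis
  proof (cases "c = a")
    case True then show ?thesis by (simp add: dist_refl delta_def)
  next
    case ne: False
    show ?thesis
    proof (cases "HE u c a")
      case True then show ?thesis using ne Le dist_one[of L "(u,c)" "(u,a)"] by (simp add: delta_def)
    next
      case False
      obtain y where y: "E u y" using nbr assms by blast
      then obtain d where d: "d \<in> HV y" using H_ne E_V by blast
      have "L (u, c) (y, d)" using y d assms E_V by (auto simp: L_iff)
      then have "(L ^^ 1) (u, c) (y, d)" by (simp add: relcompp_apply)
      moreover have "L (y, d) (u, a)" using y d assms E_V E_sym by (auto simp: L_iff)
      ultimately have "(L ^^ Suc 1) (u, c) (u, a)" by (rule relpowp_Suc_I)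
      then have "(L ^^ 2) (u, c) (u, a)" by (simp add: numeral_2_eq_2)
      moreover have "\<not> (L ^^ m) (u, c) (u, a)" if "m < 2" for m
      proof -
        from that have "m = 0 \<or> m = 1" by auto
        then show ?thesis using ne False Le by (auto simp: relcompp_apply)
      qed
      ultimately have "dist L (u, c) (u, a) = enat 2" by (rule dist_eqI)
      then show ?thesis using ne False by (simp add: delta_def numeral_eq_enat)
    qed
  qed
qed

lemma twin_W:
  assumes "W E n w u" "w \<noteq> u" "closed_nbhd E u = closed_nbhd E u'"
  shows "W E n w u'"
proof -
  from assms obtain m where m: "m \<le> n" "(E ^^ m) w u" unfolding W_def by auto
  have "m \<noteq> 0" using m assms(2) by (cases m) auto
  then obtain k where k: "m = Suc k" by (cases m) auto
  with m obtain z where z: "(E ^^ k) w z" "E z u" by (auto elim: relpowp_Suc_E)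
  have "z \<in> closed_nbhd E u" using z E_sym unfolding closed_nbhd_def by auto
  with assms(3) have "z = u' \<or> E u' z" unfolding closed_nbhd_def by auto
  then show ?thesis
  proof
    assume "z = u'" with z m k show ?thesis unfolding W_def by (intro exI[of _ k]) auto
  next
    assume "E u' z"
    then have "(E ^^ Suc k) w u'" using z E_sym by (blast intro: relpowp_Suc_I)
    with m k show ?thesis unfolding W_def by blast
  qed
qed

lemma twin_dist:
  assumes "w \<noteq> u" "w \<noteq> u'" "closed_nbhd E u = closed_nbhd E u'"
  shows "dist E w u = dist E w u'"
  using twin_W[of _ w u u'] twin_W[of _ w u' u] assms by (intro dist_W) metis

end


definition Sl :: "('a \<times> 'b) set \<Rightarrow> 'a \<Rightarrow> 'b set" where
  "Sl S u = {a. (u, a) \<in> S}"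

context lexs begin

lemma delta_sym: "u \<in> V \<Longrightarrow> delta (HE u) c a = 1 \<longleftrightarrow> HE u a c"
  by (cases "c = a"; cases "HE u c a") (auto simp: delta_def H_irr dest: H_sym)

lemma cn_adj: "u \<in> V \<Longrightarrow> u' \<in> V \<Longrightarrow> u \<noteq> u' \<Longrightarrow> closed_nbhd E u = closed_nbhd E u' \<Longrightarrow> E u u'"
proof -
  assume a: "u \<noteq> u'" "closed_nbhd E u = closed_nbhd E u'"
  have h: "u' \<in> closed_nbhd E u'" by (simp add: closed_nbhd_def)
  have "u' \<in> closed_nbhd E u" using h by (simp only: a(2))
  then show "E u u'" using a(1) unfolding closed_nbhd_def by simp
qed

lemma res_nec_A:
  assumes "S \<subseteq> Sigma V HV" "local_resolving L (dist L) S" "u \<in> V"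
  shows "local_resolving (HE u) (dist2 (HE u)) (Sl S u)"
  unfolding local_resolving_def
proof (intro allI impI)
  fix a b assume ab: "HE u a b"
  then have abV: "a \<in> HV u" "b \<in> HV u" using H_V assms(3) by auto
  have "L (u, a) (u, b)" using ab abV assms(3) by (auto simp: L_iff)
  with assms(2) obtain s where s: "s \<in> S" "dist L s (u, a) \<noteq> dist L s (u, b)"
    unfolding local_resolving_def by blast
  obtain w c where wc: "s = (w, c)" by (cases s)
  have sV: "(w, c) \<in> Sigma V HV" using s wc assms(1) by auto
  show "\<exists>s\<in>Sl S u. dist2 (HE u) s a \<noteq> dist2 (HE u) s b"
  proof (cases "w = u")
    case True
    then have "dist L s (u, a) = delta (HE u) c a" "dist L s (u, b) = delta (HE u) c b"
      using distL_same[of u c a] distL_same[of u c b] sV abV wc assms(3) by simp_all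
    then show ?thesis using s True wc by (auto simp: Sl_def dist2_delta)
  next
    case False
    then have "dist L s (u, a) = dist E w u" "dist L s (u, b) = dist E w u"
      using distL_diff[of w c u a] distL_diff[of w c u b] sV abV wc assms(3) by simp_all
    then show ?thesis using s by simp
  qed
qed

lemma res_nec_B:
  assumes "S \<subseteq> Sigma V HV" "local_resolving L (dist L) S"
    and "u \<in> V" "u' \<in> V" "u \<noteq> u'" "closed_nbhd E u = closed_nbhd E u'"
    and "a \<in> HV u" "b \<in> HV u'" "Sl S u \<subseteq> {w. HE u a w}" "Sl S u' \<subseteq> {w. HE u' b w}"
  shows False
proof -
  have e: "E u u'" using cn_adj assms by blast
  then have "L (u, a) (u', b)" using assms by (auto simp: L_iff)
  with assms(2) obtain s where s: "s \<in> S" "dist L s (u, a) \<noteq> dist L s (u', b)"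
    unfolding local_resolving_def by blast
  obtain w c where wc: "s = (w, c)" by (cases s)
  have sV: "(w, c) \<in> Sigma V HV" using s wc assms(1) by auto
  have d1: "dist E u u' = 1" "dist E u' u = 1" using e E_sym assms(5) by (auto simp: dist_one)
  consider "w = u" | "w = u'" | "w \<noteq> u" "w \<noteq> u'" by blast
  then show False
  proof cases
    case 1
    then have "c \<in> Sl S u" using s wc by (simp add: Sl_def)
    then have "HE u a c" using assms(9) by auto
    then have "dist L s (u, a) = 1" using distL_same[of u c a] sV 1 wc assms(3,7) delta_sym[of u c a] by simp
    moreover have "dist L s (u', b) = 1" using distL_diff[of u c u' b] sV 1 wc assms(4,5,8) d1 by simp
    ultimately show False using s by simp
  next
    case 2
    then have "c \<in> Sl S u'" using s wc by (simp add: Sl_def)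
    then have "HE u' b c" using assms(10) by auto
    then have "dist L s (u', b) = 1" using distL_same[of u' c b] sV 2 wc assms(4,8) delta_sym[of u' c b] by simp
    moreover have "dist L s (u, a) = 1" using distL_diff[of u' c u a] sV 2 wc assms(3,5,7) d1 by simp
    ultimately show False using s by simp
  next
    case 3
    have "dist L s (u, a) = dist E w u"
      using distL_diff[of w c u a] sV wc assms(3,7) 3 by simp
    moreover have "dist L s (u', b) = dist E w u'"
      using distL_diff[of w c u' b] sV wc assms(4,8) 3 by simp
    moreover have "dist E w u = dist E w u'" using twin_dist[OF 3(1) 3(2) assms(6)] .
    ultimately show False using s by simp
  qed
qed

lemma res_suff:
  assumes "S \<subseteq> Sigma V HV"
    and A: "\<And>u. u \<in> V \<Longrightarrow> local_resolving (HE u) (dist2 (HE u)) (Sl S u)"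
    and B: "\<And>u u'. u \<in> V \<Longrightarrow> u' \<in> V \<Longrightarrow> u \<noteq> u' \<Longrightarrow> closed_nbhd E u = closed_nbhd E u' \<Longrightarrow>
       \<not> (\<exists>a\<in>HV u. Sl S u \<subseteq> {w. HE u a w}) \<or> \<not> (\<exists>b\<in>HV u'. Sl S u' \<subseteq> {w. HE u' b w})"
  shows "local_resolving L (dist L) S"
  unfolding local_resolving_def
proof (intro allI impI)
  fix p q assume pq: "L p q"
  obtain u a where p: "p = (u, a)" by (cases p)
  obtain u' b where q: "q = (u', b)" by (cases q)
  have pV: "u \<in> V" "a \<in> HV u" and qV: "u' \<in> V" "b \<in> HV u'" using pq p q by (auto simp: L_iff)
  show "\<exists>s\<in>S. dist L s p \<noteq> dist L s q"
  proof (cases "u = u'")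
    case True
    with pq p q have ab: "HE u a b" using E_irr by (auto simp: L_iff)
    from A[OF pV(1)] ab obtain c where c: "c \<in> Sl S u" "dist2 (HE u) c a \<noteq> dist2 (HE u) c b"
      unfolding local_resolving_def by blast
    have cV: "c \<in> HV u" using c assms(1) pV by (auto simp: Sl_def)
    have "dist L (u, c) p \<noteq> dist L (u, c) q"
      using c True p q distL_same[OF pV(1) cV pV(2)] distL_same[OF pV(1) cV] qV
      by (auto simp: dist2_delta)
    moreover have "(u, c) \<in> S" using c by (simp add: Sl_def)
    ultimately show ?thesis by (intro bexI[of _ "(u,c)"]) auto
  next
    case ne: False
    with pq p q have e: "E u u'" by (auto simp: L_iff)
    have d1: "dist E u u' = 1" "dist E u' u = 1" using e E_sym ne by (auto simp: dist_one)
    show ?thesis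
    proof (cases "closed_nbhd E u = closed_nbhd E u'")
      case True
      from B[OF pV(1) qV(1) ne True] show ?thesis
      proof
        assume "\<not> (\<exists>a\<in>HV u. Sl S u \<subseteq> {w. HE u a w})"
        then obtain c where c: "c \<in> Sl S u" "\<not> HE u a c" using pV by auto
        have cV: "c \<in> HV u" using c assms(1) pV by (auto simp: Sl_def)
        have "dist L (u, c) p \<noteq> 1" using distL_same[OF pV(1) cV pV(2)] p delta_sym[OF pV(1)] c by simp
        moreover have "dist L (u, c) q = 1" using distL_diff[of u c u' b] cV pV qV q ne d1 by auto
        moreover have "(u, c) \<in> S" using c by (simp add: Sl_def)
        ultimately show ?thesis by (intro bexI[of _ "(u,c)"]) auto
      next
        assume "\<not> (\<exists>b\<in>HV u'. Sl S u' \<subseteq> {w. HE u' b w})"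
        then obtain c where c: "c \<in> Sl S u'" "\<not> HE u' b c" using qV by auto
        have cV: "c \<in> HV u'" using c assms(1) qV by (auto simp: Sl_def)
        have "dist L (u', c) q \<noteq> 1" using distL_same[OF qV(1) cV qV(2)] q delta_sym[OF qV(1)] c by simp
        moreover have "dist L (u', c) p = 1" using distL_diff[of u' c u a] cV pV qV p ne d1 by auto
        moreover have "(u', c) \<in> S" using c by (simp add: Sl_def)
        ultimately show ?thesis by (intro bexI[of _ "(u',c)"]) auto
      qed
    next
      case False
      have "\<exists>w. w \<noteq> u \<and> w \<noteq> u' \<and> ((E w u \<and> \<not> E w u') \<or> (E w u' \<and> \<not> E w u))"
      proof (rule ccontr)
        assume na: "\<not> ?thesis"
        have "closed_nbhd E u = closed_nbhd E u'"
        proof (rule set_eqI)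
          fix x show "x \<in> closed_nbhd E u \<longleftrightarrow> x \<in> closed_nbhd E u'"
            using na e E_sym[of u u'] E_sym[of u x] E_sym[of u' x] E_sym[of x u] E_sym[of x u']
            by (cases "x = u"; cases "x = u'") (auto simp: closed_nbhd_def)
        qed
        with False show False by simp
      qed
      then obtain w where w: "w \<noteq> u" "w \<noteq> u'" "(E w u \<and> \<not> E w u') \<or> (E w u' \<and> \<not> E w u)" by blast
      then have wV: "w \<in> V" using E_V by blast
      obtain v v' where "HE w v v'" using gH wV by blast
      with A[OF wV] obtain c where c: "c \<in> Sl S w" unfolding local_resolving_def by blast
      have cV: "c \<in> HV w" using c assms(1) wV by (auto simp: Sl_def)
      have "dist L (w, c) p = dist E w u" using distL_diff[of w c u a] cV wV pV p w by simp
      moreover have "dist L (w, c) q = dist E w u'" using distL_diff[of w c u' b] cV wV qV q w by simp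
      moreover have "dist E w u \<noteq> dist E w u'" using w dist_one[of E w u] dist_one[of E w u'] by auto
      moreover have "(w, c) \<in> S" using c by (simp add: Sl_def)
      ultimately show ?thesis by (intro bexI[of _ "(w,c)"]) auto
    qed
  qed
qed

end


lemma res_mono: "local_resolving H d S \<Longrightarrow> S \<subseteq> T \<Longrightarrow> local_resolving H d T"
  unfolding local_resolving_def by blast

context lexs begin

abbreviation "I \<equiv> {u\<in>V. class_G (HV u) (HE u)}"
abbreviation "Ad u \<equiv> local_adj_dim (HV u) (HE u)"
abbreviation "tc \<equiv> twin_class V E"
abbreviation "CC \<equiv> {U. (\<exists>x\<in>V. U = tc x) \<and> card U \<ge> 2 \<and> I \<inter> U \<noteq> {}}"

lemma adim_le:
  assumes "u \<in> V" "S \<subseteq> HV u" "local_resolving (HE u) (dist2 (HE u)) S"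
  shows "Ad u \<le> card S"
  unfolding local_adj_dim_def using assms by (intro Least_le) blast

lemma basis_ex:
  assumes "u \<in> V" shows "\<exists>B. local_adj_basis (HV u) (HE u) B"
proof -
  have "local_resolving (HE u) (dist2 (HE u)) (HV u)"
    unfolding local_resolving_def
  proof (intro allI impI)
    fix x y assume xy: "HE u x y"
    then have "x \<in> HV u" "x \<noteq> y" using H_V H_irr assms by auto
    then show "\<exists>s\<in>HV u. dist2 (HE u) s x \<noteq> dist2 (HE u) s y"
      using xy by (intro bexI[of _ x]) (auto simp: dist2_delta delta_def)
  qed
  then have ex: "\<exists>k S. S \<subseteq> HV u \<and> card S = k \<and> local_resolving (HE u) (dist2 (HE u)) S" by blast
  from LeastI_ex[OF ex] show ?thesis unfolding local_adj_basis_def local_adj_dim_def by blast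
qed

lemma basis_plus:
  assumes "u \<in> V" "local_adj_basis (HV u) (HE u) B" "B \<subseteq> {w. HE u v w}"
  shows "\<not> (\<exists>x\<in>HV u. insert v B \<subseteq> {w. HE u x w})"
proof
  assume "\<exists>x\<in>HV u. insert v B \<subseteq> {w. HE u x w}"
  then obtain x where x: "HE u x v" "B \<subseteq> {w. HE u x w}" by auto
  then have "HE u v x" using H_sym assms(1) by blast
  with assms(2) obtain c where c: "c \<in> B" "dist2 (HE u) c v \<noteq> dist2 (HE u) c x"
    unfolding local_adj_basis_def local_resolving_def by blast
  have "HE u v c" "HE u x c" using c assms(3) x by auto
  then have "HE u c v" "HE u c x" "c \<noteq> v" "c \<noteq> x" using H_sym H_irr assms(1) by blast+
  then show False using c by (simp add: dist2_delta delta_def)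
qed

lemma tc_self: "x \<in> V \<Longrightarrow> x \<in> tc x" unfolding twin_class_def by simp
lemma tc_eq: "y \<in> tc x \<Longrightarrow> tc y = tc x" unfolding twin_class_def by auto
lemma tc_V: "tc x \<subseteq> V" unfolding twin_class_def by auto
lemma tc_cn: "y \<in> tc x \<Longrightarrow> closed_nbhd E y = closed_nbhd E x" unfolding twin_class_def by auto

lemma CC_fin: "finite CC"
proof -
  have "CC \<subseteq> Pow V" using tc_V by auto
  then show ?thesis using finV finite_subset by blast
qed

lemma CC_sub: "U \<in> CC \<Longrightarrow> U \<subseteq> V" using tc_V by auto

lemma CC_disj: "U \<in> CC \<Longrightarrow> U' \<in> CC \<Longrightarrow> U \<noteq> U' \<Longrightarrow> U \<inter> U' = {}"
  using tc_eq by blast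

lemma lower_gen:
  assumes S: "S \<subseteq> Sigma V HV" and R: "local_resolving L (dist L) S"
    and Cfin: "finite C" and Csub: "\<And>U. U \<in> C \<Longrightarrow> U \<subseteq> V"
    and Cdisj: "\<And>U U'. U \<in> C \<Longrightarrow> U' \<in> C \<Longrightarrow> U \<noteq> U' \<Longrightarrow> U \<inter> U' = {}"
    and Ctc: "\<And>U. U \<in> C \<Longrightarrow> \<exists>x\<in>V. U = tc x"
  shows "(\<Sum>u\<in>V. Ad u) + (\<Sum>U\<in>C. card (I \<inter> U) - 1) \<le> card S"
proof -
  define ex where "ex u = card (Sl S u) - Ad u" for u
  have SlH: "u \<in> V \<Longrightarrow> Sl S u \<subseteq> HV u" for u using S by (auto simp: Sl_def)
  have finSl: "u \<in> V \<Longrightarrow> finite (Sl S u)" for u using SlH finH finite_subset by blast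
  have resA: "u \<in> V \<Longrightarrow> local_resolving (HE u) (dist2 (HE u)) (Sl S u)" for u
    using res_nec_A[OF S R] .
  have cSl: "card (Sl S u) = Ad u + ex u" if "u \<in> V" for u
  proof -
    have "Ad u \<le> card (Sl S u)" using adim_le[OF that SlH[OF that] resA[OF that]] .
    then show ?thesis unfolding ex_def by simp
  qed
  have Seq: "S = Sigma V (Sl S)" using S by (auto simp: Sl_def)
  have "card (Sigma V (Sl S)) = (\<Sum>u\<in>V. card (Sl S u))"
    by (rule card_SigmaI) (use finV finSl in auto)
  also have "\<dots> = (\<Sum>u\<in>V. Ad u + ex u)"
    by (rule sum.cong) (simp_all add: cSl)
  also have "\<dots> = (\<Sum>u\<in>V. Ad u) + (\<Sum>u\<in>V. ex u)"
    by (rule sum.distrib)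
  finally have cS: "card S = (\<Sum>u\<in>V. Ad u) + (\<Sum>u\<in>V. ex u)" using Seq by simp
  have perU: "card (I \<inter> U) - 1 \<le> (\<Sum>u\<in>U. ex u)" if U: "U \<in> C" for U
  proof -
    obtain x where x: "x \<in> V" "U = tc x" using Ctc[OF U] by blast
    have finU: "finite U" using Csub[OF U] finV finite_subset by blast
    define Z where "Z = {u \<in> I \<inter> U. ex u = 0}"
    have finZ: "finite Z" unfolding Z_def using finU by auto
    have nb: "\<exists>a\<in>HV u. Sl S u \<subseteq> {w. HE u a w}" if "u \<in> Z" for u
    proof -
      have uV: "u \<in> V" "class_G (HV u) (HE u)" "ex u = 0" using that unfolding Z_def by auto
      have "local_adj_basis (HV u) (HE u) (Sl S u)"
        unfolding local_adj_basis_def using SlH[OF uV(1)] resA[OF uV(1)] cSl[OF uV(1)] uV(3) by simp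
      with uV show ?thesis unfolding class_G_def by blast
    qed
    have "card Z \<le> Suc 0"
      unfolding card_le_Suc0_iff_eq[OF finZ]
    proof (intro ballI)
      fix u u' assume uu: "u \<in> Z" "u' \<in> Z"
      show "u = u'"
      proof (rule ccontr)
        assume ne: "u \<noteq> u'"
        have m: "u \<in> tc x" "u' \<in> tc x" using uu x unfolding Z_def by auto
        have V2: "u \<in> V" "u' \<in> V" using m tc_V by auto
        have cn: "closed_nbhd E u = closed_nbhd E u'" using tc_cn[OF m(1)] tc_cn[OF m(2)] by simp
        from nb[OF uu(1)] obtain a where a: "a \<in> HV u" "Sl S u \<subseteq> {w. HE u a w}" by blast
        from nb[OF uu(2)] obtain b where b: "b \<in> HV u'" "Sl S u' \<subseteq> {w. HE u' b w}" by blast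
        show False using res_nec_B[OF S R V2 ne cn a(1) b(1) a(2) b(2)] .
      qed
    qed
    then have "card (I \<inter> U) - 1 \<le> card (I \<inter> U - Z)"
      using diff_card_le_card_Diff[OF finZ, of "I \<inter> U"] by linarith
    also have "\<dots> = (\<Sum>u\<in>I \<inter> U - Z. 1)" by simp
    also have "\<dots> \<le> (\<Sum>u\<in>I \<inter> U - Z. ex u)"
      by (rule sum_mono) (auto simp: Z_def)
    also have "\<dots> \<le> (\<Sum>u\<in>U. ex u)"
      by (rule sum_mono2) (use finU in auto)
    finally show ?thesis .
  qed
  have "(\<Sum>U\<in>C. card (I \<inter> U) - 1) \<le> (\<Sum>U\<in>C. \<Sum>u\<in>U. ex u)"
    by (rule sum_mono) (rule perU)
  also have "\<dots> = (\<Sum>u\<in>\<Union>C. ex u)"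
  proof -
    have "\<forall>A\<in>C. finite A" using Csub finV finite_subset by blast
    moreover have "\<forall>A\<in>C. \<forall>B\<in>C. A \<noteq> B \<longrightarrow> A \<inter> B = {}" using Cdisj by blast
    ultimately show ?thesis using sum.Union_disjoint[of C ex] by (simp add: comp_def)
  qed
  also have "\<dots> \<le> (\<Sum>u\<in>V. ex u)"
    by (rule sum_mono2) (use finV Csub in auto)
  finally show ?thesis using cS by linarith
qed

lemma lower:
  assumes S: "S \<subseteq> Sigma V HV" and R: "local_resolving L (dist L) S"
  shows "(\<Sum>u\<in>V. Ad u) + (\<Sum>U\<in>CC. card (I \<inter> U) - 1) \<le> card S"
  by (rule lower_gen[OF S R CC_fin CC_sub CC_disj]) auto

lemma upper:
  "\<exists>S. S \<subseteq> Sigma V HV \<and> local_resolving L (dist L) S \<and>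
      card S = (\<Sum>u\<in>V. Ad u) + (\<Sum>U\<in>CC. card (I \<inter> U) - 1)"
proof -
  define C where "C = CC"
  have Cmem: "U \<in> C \<longleftrightarrow> (\<exists>x\<in>V. U = tc x) \<and> card U \<ge> 2 \<and> I \<inter> U \<noteq> {}" for U
    unfolding C_def by simp
  have Cfin: "finite C" unfolding C_def by (rule CC_fin)
  define P where "P u B \<longleftrightarrow> local_adj_basis (HV u) (HE u) B \<and> (u \<notin> I \<longrightarrow> \<not> (\<exists>a\<in>HV u. B \<subseteq> {w. HE u a w}))" for u B
  have Pex: "\<exists>B. P u B" if u: "u \<in> V" for u
  proof (cases "class_G (HV u) (HE u)")
    case True then show ?thesis using basis_ex[OF u] u unfolding P_def by auto
  next
    case False then show ?thesis unfolding P_def class_G_def by blast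
  qed
  define bas where "bas u = (SOME B. P u B)" for u
  have basP: "u \<in> V \<Longrightarrow> P u (bas u)" for u unfolding bas_def using Pex someI_ex by metis
  have bas1: "bas u \<subseteq> HV u" "local_resolving (HE u) (dist2 (HE u)) (bas u)" "card (bas u) = Ad u"
    "local_adj_basis (HV u) (HE u) (bas u)" if "u \<in> V" for u
    using basP[OF that] unfolding P_def local_adj_basis_def by auto
  have finbas: "u \<in> V \<Longrightarrow> finite (bas u)" for u using bas1(1) finH finite_subset by blast
  define vv where "vv u = (SOME a. a \<in> HV u \<and> bas u \<subseteq> {w. HE u a w})" for u
  have vvP: "vv u \<in> HV u \<and> bas u \<subseteq> {w. HE u (vv u) w}" if "u \<in> I" for u
  proof -
    have "\<exists>a. a \<in> HV u \<and> bas u \<subseteq> {w. HE u a w}"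
      using that bas1(4)[of u] unfolding class_G_def by blast
    then show ?thesis unfolding vv_def by (rule someI_ex)
  qed
  define rho where "rho U = (SOME u. u \<in> I \<inter> U)" for U
  have rhoP: "I \<inter> U \<noteq> {} \<Longrightarrow> rho U \<in> I \<inter> U" for U unfolding rho_def by (rule someI_ex) blast
  define ext where "ext u \<longleftrightarrow> u \<in> I \<and> u \<noteq> rho (tc u)" for u
  define T where "T u = (if ext u then insert (vv u) (bas u) else bas u)" for u
  define S where "S = Sigma V T"
  have TH: "T u \<subseteq> HV u" if "u \<in> V" for u
    using bas1(1)[OF that] vvP[of u] unfolding T_def ext_def by auto
  have finT: "finite (T u)" if "u \<in> V" for u using finbas[OF that] unfolding T_def by auto
  have cT: "card (T u) = Ad u + (if ext u then 1 else 0)" if u: "u \<in> V" for u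
  proof (cases "ext u")
    case True
    then have uI: "u \<in> I" unfolding ext_def by simp
    have "vv u \<notin> bas u" using vvP[OF uI] H_irr u by blast
    then show ?thesis using True finbas[OF u] bas1(3)[OF u] unfolding T_def by simp
  next
    case False then show ?thesis using bas1(3)[OF u] unfolding T_def by simp
  qed
  have SlT: "u \<in> V \<Longrightarrow> Sl S u = T u" for u unfolding S_def Sl_def by auto
  have SH: "S \<subseteq> Sigma V HV" unfolding S_def using TH by auto
  have "card S = (\<Sum>u\<in>V. card (T u))"
    unfolding S_def by (rule card_SigmaI) (use finV finT in auto)
  also have "\<dots> = (\<Sum>u\<in>V. Ad u + (if ext u then 1 else 0))"
    by (rule sum.cong) (simp_all add: cT)
  also have "\<dots> = (\<Sum>u\<in>V. Ad u) + (\<Sum>u\<in>V. (if ext u then 1 else 0))"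
    by (rule sum.distrib)
  also have "(\<Sum>u\<in>V. (if ext u then 1 else 0)) = card {u\<in>V. ext u}"
    using sum.inter_filter[OF finV, of "\<lambda>_. 1::nat" ext] by simp
  also have "{u\<in>V. ext u} = (\<Union>U\<in>C. I \<inter> U - {rho U})"
  proof (rule set_eqI)
    fix u show "u \<in> {u\<in>V. ext u} \<longleftrightarrow> u \<in> (\<Union>U\<in>C. I \<inter> U - {rho U})"
    proof
      assume "u \<in> {u\<in>V. ext u}"
      then have u: "u \<in> V" "u \<in> I" "u \<noteq> rho (tc u)" unfolding ext_def by auto
      have ne: "I \<inter> tc u \<noteq> {}" using u tc_self by blast
      then have r: "rho (tc u) \<in> I \<inter> tc u" by (rule rhoP)
      have "finite (tc u)" using tc_V finV finite_subset by blast
      moreover have "{u, rho (tc u)} \<subseteq> tc u" using r tc_self[OF u(1)] by auto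
      ultimately have "card {u, rho (tc u)} \<le> card (tc u)" by (rule card_mono)
      then have "card (tc u) \<ge> 2" using u(3) by simp
      then have "tc u \<in> C" using Cmem u ne by blast
      then show "u \<in> (\<Union>U\<in>C. I \<inter> U - {rho U})" using u tc_self[OF u(1)] by blast
    next
      assume "u \<in> (\<Union>U\<in>C. I \<inter> U - {rho U})"
      then obtain U where U: "U \<in> C" "u \<in> I" "u \<in> U" "u \<noteq> rho U" by blast
      then obtain x where "x \<in> V" "U = tc x" using Cmem by blast
      then have "tc u = U" using tc_eq U by blast
      then show "u \<in> {u\<in>V. ext u}" using U unfolding ext_def by auto
    qed
  qed
  also have "card (\<Union>U\<in>C. I \<inter> U - {rho U}) = (\<Sum>U\<in>C. card (I \<inter> U - {rho U}))"
  proof (rule card_UN_disjoint[OF Cfin])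
    show "\<forall>U\<in>C. finite (I \<inter> U - {rho U})" using finV by auto
    show "\<forall>U\<in>C. \<forall>U'\<in>C. U \<noteq> U' \<longrightarrow> (I \<inter> U - {rho U}) \<inter> (I \<inter> U' - {rho U'}) = {}"
      using CC_disj unfolding C_def by blast
  qed
  also have "(\<Sum>U\<in>C. card (I \<inter> U - {rho U})) = (\<Sum>U\<in>C. card (I \<inter> U) - 1)"
  proof (rule sum.cong)
    fix U assume "U \<in> C"
    then have "rho U \<in> I \<inter> U" using Cmem rhoP by blast
    then show "card (I \<inter> U - {rho U}) = card (I \<inter> U) - 1" by (simp add: card_Diff_singleton)
  qed simp
  finally have cS: "card S = (\<Sum>u\<in>V. Ad u) + (\<Sum>U\<in>C. card (I \<inter> U) - 1)" .
  have keyP: "u \<in> I \<and> u = rho (tc u)" if u: "u \<in> V" and p: "\<exists>a\<in>HV u. T u \<subseteq> {w. HE u a w}" for u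
  proof (cases "u \<in> I")
    case False
    then have "\<not> ext u" unfolding ext_def by blast
    then have "T u = bas u" unfolding T_def by simp
    then show ?thesis using p basP[OF u] False unfolding P_def by auto
  next
    case True
    show ?thesis
    proof (cases "ext u")
      case True
      then have uI: "u \<in> I" unfolding ext_def by simp
      have Teq: "T u = insert (vv u) (bas u)" using True unfolding T_def by simp
      have nn: "\<not> (\<exists>x\<in>HV u. insert (vv u) (bas u) \<subseteq> {w. HE u x w})"
        using basis_plus[OF u bas1(4)[OF u], of "vv u"] vvP[OF uI] by blast
      from p obtain a where a: "a \<in> HV u" "T u \<subseteq> {w. HE u a w}" by blast
      have "insert (vv u) (bas u) \<subseteq> {w. HE u a w}" using a(2) unfolding Teq .
      with a(1) nn have False by blast
      then show ?thesis ..
    next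
      case False then show ?thesis using \<open>u \<in> I\<close> unfolding ext_def by simp
    qed
  qed
  have R: "local_resolving L (dist L) S"
  proof (rule res_suff[OF SH])
    fix u assume u: "u \<in> V"
    have "bas u \<subseteq> T u" unfolding T_def by auto
    from res_mono[OF bas1(2)[OF u] this] show "local_resolving (HE u) (dist2 (HE u)) (Sl S u)"
      unfolding SlT[OF u] .
  next
    fix u u' assume uu: "u \<in> V" "u' \<in> V" "u \<noteq> u'" "closed_nbhd E u = closed_nbhd E u'"
    have tce: "tc u = tc u'" using uu(4) unfolding twin_class_def by simp
    show "\<not> (\<exists>a\<in>HV u. Sl S u \<subseteq> {w. HE u a w}) \<or> \<not> (\<exists>b\<in>HV u'. Sl S u' \<subseteq> {w. HE u' b w})"
    proof (rule ccontr)
      assume "\<not> ?thesis"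
      then have h: "\<exists>a\<in>HV u. Sl S u \<subseteq> {w. HE u a w}" "\<exists>b\<in>HV u'. Sl S u' \<subseteq> {w. HE u' b w}"
        by blast+
      have "u = rho (tc u)" using keyP[OF uu(1) h(1)[unfolded SlT[OF uu(1)]]] by blast
      moreover have "u' = rho (tc u')" using keyP[OF uu(2) h(2)[unfolded SlT[OF uu(2)]]] by blast
      ultimately
      show False using tce uu(3) by simp
    qed
  qed
  show ?thesis using SH R cS unfolding C_def by blast
qed

end

theorem mainTheorem2:
  fixes V :: "'a set" and E :: "'a \<Rightarrow> 'a \<Rightarrow> bool"
    and HV :: "'a \<Rightarrow> 'b set" and HE :: "'a \<Rightarrow> 'b \<Rightarrow> 'b \<Rightarrow> bool"
  assumes "graph V E" and "connected_graph V E" and "card V \<ge> 2"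
    and "\<forall>u\<in>V. graph (HV u) (HE u) \<and> (\<exists>v w. HE u v w)"
  shows "local_metric_dim (lex_V V HV) (lex_E V E HV HE) =
     (\<Sum>u\<in>V. local_adj_dim (HV u) (HE u)) +
     (\<Sum>U\<in>{U. (\<exists>x\<in>V. U = twin_class V E x) \<and> card U \<ge> 2
              \<and> {u\<in>V. class_G (HV u) (HE u)} \<inter> U \<noteq> {}}.
        card ({u\<in>V. class_G (HV u) (HE u)} \<inter> U) - 1)"
proof -
  interpret lexs V E HV HE using assms unfolding lexs_def by blast
  obtain S where S: "S \<subseteq> Sigma V HV" "local_resolving L (dist L) S"
    "card S = (\<Sum>u\<in>V. Ad u) + (\<Sum>U\<in>CC. card (I \<inter> U) - 1)"
    using upper by blast
  show ?thesis unfolding local_metric_dim_def lex_V_def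
  proof (rule Least_equality)
    show "\<exists>S. S \<subseteq> Sigma V HV \<and> card S = (\<Sum>u\<in>V. Ad u) + (\<Sum>U\<in>CC. card (I \<inter> U) - 1)
       \<and> local_resolving L (dist L) S" using S by blast
  next
    fix y assume "\<exists>S. S \<subseteq> Sigma V HV \<and> card S = y \<and> local_resolving L (dist L) S"
    then obtain S' where "S' \<subseteq> Sigma V HV" "card S' = y" "local_resolving L (dist L) S'" by blast
    then show "(\<Sum>u\<in>V. Ad u) + (\<Sum>U\<in>CC. card (I \<inter> U) - 1) \<le> y" using lower by blast
  qed
qed

end
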